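(* Let $d$ be even and $n\ge d+1$. Let $x_1,\dots,x_n\in\mathbb R^d$ be such that all maximal minors of the $(d+1)\times n$ matrix with columns $\binom{1}{x_1},\dots,\binom{1}{x_n}$ have the same (nonzero) sign, and let $P=\operatorname{conv}(x_1,\dots,x_n)$ (a cyclic $d$-polytope with $n$ vertices). Let $\pi\in S_n$ be such that $x_i\mapsto x_{\pi(i)}$ is a combinatorial automorphism of $P$. Then all maximal minors of the matrix with columns $\binom{1}{x_{\pi(1)}},\dots,\binom{1}{x_{\pi(n)}}$ also have the same sign.
   Context: A combinatorial automorphism of a polytope is a permutation of its vertices that induces an automorphism of its face lattice. *)

theory Defs
  imports "HOL-Analysis.Analysis"
begin

definition leibniz_det :: "nat \<Rightarrow> (nat \<Rightarrow> nat \<Rightarrow> real) \<Rightarrow> real" where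
  "leibniz_det k A = (\<Sum>p | p permutes {..<k}. of_int (sign p) * (\<Prod>i<k. A i (p i)))"

text \<open>A fixed enumeration of the coordinates of real^'d (row order; any choice only
  multiplies all maximal minors by the same sign).\<close>
definition coord_enum :: "nat \<Rightarrow> 'd::finite" where
  "coord_enum = (SOME e. bij_betw e {..<CARD('d)} (UNIV::'d set))"

definition lifted_entry :: "(nat \<Rightarrow> real ^ 'd::finite) \<Rightarrow> nat \<Rightarrow> nat \<Rightarrow> real" where
  "lifted_entry x i j = (if i = 0 then 1 else x j $ coord_enum (i - 1))"

definition max_minor :: "(nat \<Rightarrow> real ^ 'd::finite) \<Rightarrow> (nat \<Rightarrow> nat) \<Rightarrow> real" where
  "max_minor x c = leibniz_det (CARD('d) + 1) (\<lambda>i k. lifted_entry x i (c k))"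

definition minors_same_sign :: "nat \<Rightarrow> (nat \<Rightarrow> real ^ 'd::finite) \<Rightarrow> bool" where
  "minors_same_sign n x \<longleftrightarrow>
     (\<exists>s\<in>{-1, 1::real}. \<forall>c. strict_mono_on {..CARD('d)} c \<and> c (CARD('d)) < n
         \<longrightarrow> s * max_minor x c > 0)"

definition vertices_of :: "'a::real_normed_vector set \<Rightarrow> 'a set" where
  "vertices_of P = {v. v extreme_point_of P}"

definition comb_automorphism :: "'a::euclidean_space set \<Rightarrow> ('a \<Rightarrow> 'a) \<Rightarrow> bool" where
  "comb_automorphism P \<sigma> \<longleftrightarrow> polytope P \<and> bij_betw \<sigma> (vertices_of P) (vertices_of P) \<and>
     (\<forall>S \<subseteq> vertices_of P.
        (\<exists>F. F face_of P \<and> F \<inter> vertices_of P = S) \<longleftrightarrow>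
        (\<exists>G. G face_of P \<and> G \<inter> vertices_of P = \<sigma> ` S))"

end

theory Submission
  imports Defs "Jordan_Normal_Form.Determinant"
begin


definition chiro :: "nat \<Rightarrow> (nat list \<Rightarrow> real) \<Rightarrow> bool" where
  "chiro k F \<longleftrightarrow>
    (\<forall>X Y a b. length X + length Y + 2 = k \<longrightarrow> F (X @ [a,b] @ Y) = - F (X @ [b,a] @ Y)) \<and>
    (\<forall>T a b c e. length T + 2 = k \<longrightarrow>
       F (T@[a,b]) * F (T@[c,e]) - F (T@[a,c]) * F (T@[b,e]) + F (T@[a,e]) * F (T@[b,c]) = 0)"

lemma chiro_swap: "chiro k F \<Longrightarrow> length X + length Y + 2 = k \<Longrightarrow> F (X @ [a,b] @ Y) = - F (X @ [b,a] @ Y)"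
  unfolding chiro_def by blast

lemma chiro_gp: "chiro k F \<Longrightarrow> length T + 2 = k \<Longrightarrow>
       F (T@[a,b]) * F (T@[c,e]) - F (T@[a,c]) * F (T@[b,e]) + F (T@[a,e]) * F (T@[b,c]) = 0"
  unfolding chiro_def by blast

lemma chiro_contract: "chiro (Suc (Suc k)) F \<Longrightarrow> chiro k (\<lambda>L. F (a # b # L))"
proof -
  assume c: "chiro (Suc (Suc k)) F"
  show ?thesis unfolding chiro_def
  proof (intro conjI allI impI)
    fix X Y :: "nat list" and c1 c2 :: nat
    assume "length X + length Y + 2 = k"
    thus "F (a # b # X @ [c1, c2] @ Y) = - F (a # b # X @ [c2, c1] @ Y)"
      using chiro_swap[OF c, of "a#b#X" Y c1 c2] by simp
  next
    fix T :: "nat list" and c1 c2 c3 c4 :: nat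
    assume "length T + 2 = k"
    thus "F (a # b # T @ [c1, c2]) * F (a # b # T @ [c3, c4]) - F (a # b # T @ [c1, c3]) * F (a # b # T @ [c2, c4]) +
       F (a # b # T @ [c1, c4]) * F (a # b # T @ [c2, c3]) = 0"
      using chiro_gp[OF c, of "a#b#T" c1 c2 c3 c4] by simp
  qed
qed

lemma pair_move:
  assumes "chiro k F" "length X + length Y + 2 = k"
  shows "F (X @ [a,b] @ Y) = F (a # b # X @ Y)"
  using assms(2)
proof (induction X arbitrary: Y rule: rev_induct)
  case Nil thus ?case by simp
next
  case (snoc x X)
  have l: "length X + length (x # Y) + 2 = k" using snoc.prems by simp
  have "F ((X @ [x]) @ [a,b] @ Y) = F (X @ [x,a] @ (b # Y))" by simp
  also have "\<dots> = - F (X @ [a,x] @ (b # Y))" by (rule chiro_swap[OF assms(1)]) (use l in simp)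
  also have "X @ [a,x] @ (b # Y) = (X @ [a]) @ [x,b] @ Y" by simp
  also have "F \<dots> = - F ((X @ [a]) @ [b,x] @ Y)" by (rule chiro_swap[OF assms(1)]) (use l in simp)
  also have "(X @ [a]) @ [b,x] @ Y = X @ [a,b] @ (x # Y)" by simp
  also have "F \<dots> = F (a # b # X @ x # Y)" by (rule snoc.IH[OF l])
  finally show ?case by simp
qed

lemma sign_trans: "0 < x * y \<Longrightarrow> 0 < y * z \<Longrightarrow> 0 < x * (z::real)"
  unfolding zero_less_mult_iff by auto

definition cons :: "nat set \<Rightarrow> nat \<Rightarrow> nat \<Rightarrow> bool" where
  "cons E a b \<longleftrightarrow> a \<in> E \<and> b \<in> E \<and> a < b \<and> (\<forall>z\<in>E. \<not> (a < z \<and> z < b))"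

inductive pu :: "nat set \<Rightarrow> nat set \<Rightarrow> bool" where
  pu_empty: "pu E {}"
| pu_step: "pu (E - {a,b}) S \<Longrightarrow> cons E a b \<Longrightarrow> pu E (insert a (insert b S))"

lemma pu_subset: "pu E S \<Longrightarrow> S \<subseteq> E"
  by (induction rule: pu.induct) (auto simp: cons_def)

definition sl :: "nat set \<Rightarrow> nat \<Rightarrow> nat list \<Rightarrow> bool" where
  "sl E k L \<longleftrightarrow> sorted_wrt (<) L \<and> set L \<subseteq> E \<and> length L = k"

lemma split_cons:
  fixes L :: "nat list"
  assumes "sorted_wrt (<) L" "a \<in> set L" "b \<in> set L" "a < b" "\<forall>z\<in>set L. \<not> (a < z \<and> z < b)"
  shows "\<exists>X Y. L = X @ [a,b] @ Y"
  using assms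
proof (induction L)
  case Nil thus ?case by simp
next
  case (Cons x L)
  show ?case
  proof (cases "x = a")
    case True
    then have "b \<in> set L" using Cons.prems by auto
    then obtain y L' where L: "L = y # L'" by (cases L) auto
    have "y = b"
    proof (rule ccontr)
      assume "y \<noteq> b"
      then have "b \<in> set L'" using \<open>b \<in> set L\<close> L by auto
      then have "y < b" using Cons.prems(1) L by auto
      moreover have "a < y" using Cons.prems(1) L True by auto
      ultimately show False using Cons.prems(5) L by auto
    qed
    then show ?thesis using True L by (metis append_Cons append_Nil)
  next
    case False
    then have "a \<in> set L" using Cons.prems by auto
    then have "x < a" using Cons.prems(1) by auto
    then have "b \<noteq> x" using Cons.prems(4) by simp
    then have "b \<in> set L" using Cons.prems(3) by simp
    then obtain X Y where "L = X @ [a,b] @ Y"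
      using Cons.IH Cons.prems \<open>a \<in> set L\<close> by auto
    then show ?thesis by (metis append_Cons)
  qed
qed

lemma filter_split:
  assumes "sorted_wrt (<) L" "\<forall>z\<in>set L. z < a \<or> b < z" "a < (b::nat)"
  shows "filter (\<lambda>z. z < a) L @ filter (\<lambda>z. b < z) L = L"
  using assms
proof (induction L)
  case Nil thus ?case by simp
next
  case (Cons x L)
  show ?case
  proof (cases "x < a")
    case True
    then show ?thesis using Cons by auto
  next
    case False
    then have "b < x" using Cons.prems by auto
    then have "\<forall>z\<in>set L. b < z \<and> \<not> z < a" using Cons.prems by fastforce
    then show ?thesis using \<open>b < x\<close> False
      by (simp add: filter_True filter_False)
  qed
qed

definition ins :: "nat \<Rightarrow> nat \<Rightarrow> nat list \<Rightarrow> nat list" where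
  "ins a b L = filter (\<lambda>z. z < a) L @ [a,b] @ filter (\<lambda>z. b < z) L"

lemma ins_props:
  assumes "sorted_wrt (<) L" "set L \<subseteq> E - {a,b}" "cons E a b"
  shows "sorted_wrt (<) (ins a b L)" "set (ins a b L) = insert a (insert b (set L))"
    "length (ins a b L) = length L + 2"
    "filter (\<lambda>z. z < a) L @ filter (\<lambda>z. b < z) L = L"
proof -
  have ab: "a < b" "a \<in> E" "b \<in> E" using assms(3) unfolding cons_def by auto
  have out: "\<forall>z\<in>set L. z < a \<or> b < z"
  proof
    fix z assume z: "z \<in> set L"
    then have "z \<in> E" "z \<noteq> a" "z \<noteq> b" using assms(2) by auto
    then show "z < a \<or> b < z" using assms(3) unfolding cons_def by auto
  qed
  show fs: "filter (\<lambda>z. z < a) L @ filter (\<lambda>z. b < z) L = L"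
    by (rule filter_split[OF assms(1) out ab(1)])
  show "sorted_wrt (<) (ins a b L)"
    unfolding ins_def using assms(1) ab(1)
    by (auto simp: sorted_wrt_append sorted_wrt_filter)
  show "set (ins a b L) = insert a (insert b (set L))"
    unfolding ins_def using out by auto
  have "length (filter (\<lambda>z. z < a) L) + length (filter (\<lambda>z. b < z) L) = length L"
    using arg_cong[OF fs, of length] by simp
  then show "length (ins a b L) = length L + 2" unfolding ins_def by simp
qed

lemma ins_F:
  assumes "chiro k F" "sorted_wrt (<) L" "set L \<subseteq> E - {a,b}" "cons E a b" "length L + length Z + 2 = k"
  shows "F (ins a b L @ Z) = F (a # b # L @ Z)"
proof -
  note p = ins_props[OF assms(2-4)]
  have "F (ins a b L @ Z) = F (filter (\<lambda>z. z < a) L @ [a,b] @ (filter (\<lambda>z. b < z) L @ Z))"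
    unfolding ins_def by simp
  also have "\<dots> = F (a # b # filter (\<lambda>z. z < a) L @ filter (\<lambda>z. b < z) L @ Z)"
    by (rule pair_move[OF assms(1)]) (use p(3) assms(5) in \<open>simp add: ins_def\<close>)
  also have "\<dots> = F (a # b # L @ Z)" using p(4) by (metis append.assoc)
  finally show ?thesis .
qed


lemma exlist:
  assumes "finite E" "k \<le> card E" "A \<subseteq> E" "card A \<le> k"
  shows "\<exists>L. sl E k L \<and> A \<subseteq> set L"
proof -
  have fA: "finite A" using assms finite_subset by blast
  have "k - card A \<le> card (E - A)" using assms fA by (simp add: card_Diff_subset)
  then obtain B where B: "B \<subseteq> E - A" "card B = k - card A" "finite B" by (rule obtain_subset_with_card_n)
  have cU: "card (A \<union> B) = k" using B fA assms(4) by (subst card_Un_disjoint) auto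
  obtain L where "sorted_wrt (<) L" "set L = A \<union> B" "length L = card (A \<union> B)"
    using finite_set_strict_sorted[of "A \<union> B"] fA B(3) by auto
  then show ?thesis using B assms cU unfolding sl_def by auto
qed

lemma card3: "card {a, b, c::nat} \<le> 3"
  by (cases "a = b"; cases "a = c"; cases "b = c") (auto simp: card_insert_if insert_commute)

lemma pred_cons:
  assumes "finite E" "a0 \<in> E" "a0 < p" "p \<in> E"
  defines "u \<equiv> Max {z\<in>E. z < p}"
  shows "u \<in> E" "u < p" "a0 \<le> u" "cons E u p"
proof -
  have f: "finite {z\<in>E. z < p}" using assms(1) by simp
  have ne: "a0 \<in> {z\<in>E. z < p}" using assms by simp
  have "u \<in> {z\<in>E. z < p}" unfolding u_def using f ne by (intro Max_in) auto
  then show "u \<in> E" "u < p" by auto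
  show "a0 \<le> u" unfolding u_def using f ne by (rule Max_ge)
  have "\<forall>z\<in>E. \<not> (u < z \<and> z < p)"
  proof (intro ballI notI)
    fix z assume "z \<in> E" "u < z \<and> z < p"
    then have "z \<le> u" unfolding u_def using f by (intro Max_ge) auto
    then show False using \<open>u < z \<and> z < p\<close> by simp
  qed
  then show "cons E u p" unfolding cons_def using \<open>u \<in> E\<close> \<open>u < p\<close> assms(4) by auto
qed

lemma sl_remove_pair:
  assumes "sl E k (X @ [a,b] @ Y)"
  shows "sl (E - {a,b}) (k - 2) (X @ Y)"
  using assms unfolding sl_def
  by (auto simp: sorted_wrt_append)

lemma main_comb:
  "\<forall>F E. chiro (2*m+1) F \<longrightarrow> finite E \<longrightarrow> 2*m+1 \<le> card E \<longrightarrow>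
     (\<forall>L. sl E (2*m+1) L \<longrightarrow> F L \<noteq> 0) \<longrightarrow>
     (\<forall>S L j j'. pu E S \<longrightarrow> sorted_wrt (<) L \<longrightarrow> set L = S \<longrightarrow> length L = 2*m \<longrightarrow>
         j \<in> E - S \<longrightarrow> j' \<in> E - S \<longrightarrow> 0 < F (L@[j]) * F (L@[j'])) \<longrightarrow>
     (\<forall>L L'. sl E (2*m+1) L \<longrightarrow> sl E (2*m+1) L' \<longrightarrow> 0 < F L * F L')"
proof (induction m)
  case 0
  show ?case
  proof (intro allI impI)
    fix F E L L'
    assume fac: "\<forall>S L j j'. pu E S \<longrightarrow> sorted_wrt (<) L \<longrightarrow> set L = S \<longrightarrow> length L = 2*0 \<longrightarrow>
         j \<in> E - S \<longrightarrow> j' \<in> E - S \<longrightarrow> 0 < F (L@[j]) * F (L@[j'])"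
      and L: "sl E (2*0+1) L" and L': "sl E (2*0+1) L'"
    obtain j where j: "L = [j]" "j \<in> E" using L unfolding sl_def by (auto simp: length_Suc_conv)
    obtain j' where j': "L' = [j']" "j' \<in> E" using L' unfolding sl_def by (auto simp: length_Suc_conv)
    have "0 < F ([]@[j]) * F ([]@[j'])"
      using fac[rule_format, of "{}" "[]" j j'] j j' pu_empty by simp
    then show "0 < F L * F L'" using j j' by simp
  qed
next
  case (Suc m)
  show ?case
  proof (intro allI impI)
    fix F E LL LL'
    assume ch0: "chiro (2 * Suc m + 1) F" and fin: "finite E" and cE: "2 * Suc m + 1 \<le> card E"
      and nz: "\<forall>L. sl E (2 * Suc m + 1) L \<longrightarrow> F L \<noteq> 0"
      and fac: "\<forall>S L j j'. pu E S \<longrightarrow> sorted_wrt (<) L \<longrightarrow> set L = S \<longrightarrow> length L = 2 * Suc m \<longrightarrow>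
         j \<in> E - S \<longrightarrow> j' \<in> E - S \<longrightarrow> 0 < F (L@[j]) * F (L@[j'])"
      and LL: "sl E (2 * Suc m + 1) LL" and LL': "sl E (2 * Suc m + 1) LL'"
    define k where "k = 2 * Suc m + 1"
    have kk: "k = Suc (Suc (2*m+1))" by (simp add: k_def)
    have ch: "chiro k F" using ch0 unfolding k_def .
    have ch2: "chiro (Suc (Suc (2*m+1))) F" using ch kk by simp
    have C1: "0 < F L1 * F L2"
      if ab: "cons E a b" and L1: "sl E k L1" "a \<in> set L1" "b \<in> set L1"
        and L2: "sl E k L2" "a \<in> set L2" "b \<in> set L2" for a b L1 L2
    proof -
      define F' where "F' = (\<lambda>L. F (a # b # L))"
      define E' where "E' = E - {a,b}"
      have abE: "a \<in> E" "b \<in> E" "a < b" using ab unfolding cons_def by auto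
      have ch': "chiro (2*m+1) F'" unfolding F'_def by (rule chiro_contract[OF ch2])
      have fin': "finite E'" using fin unfolding E'_def by simp
      have "card E' = card E - 2" unfolding E'_def using abE fin by (subst card_Diff_subset) auto
      then have cE': "2*m+1 \<le> card E'" using cE by simp
      have nz': "\<forall>L. sl E' (2*m+1) L \<longrightarrow> F' L \<noteq> 0"
      proof (intro allI impI)
        fix L assume "sl E' (2*m+1) L"
        then have s: "sorted_wrt (<) L" "set L \<subseteq> E - {a,b}" "length L = 2*m+1"
          unfolding sl_def E'_def by auto
        note p = ins_props[OF s(1,2) ab]
        have "sl E k (ins a b L)" unfolding sl_def using p s abE by (auto simp: k_def)
        then have "F (ins a b L @ []) \<noteq> 0" using nz k_def by simp
        moreover have "F (ins a b L @ []) = F (a # b # L @ [])"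
          by (rule ins_F[OF ch s(1,2) ab]) (use s in \<open>simp add: k_def\<close>)
        ultimately show "F' L \<noteq> 0" unfolding F'_def by simp
      qed
      have fac': "\<forall>S L j j'. pu E' S \<longrightarrow> sorted_wrt (<) L \<longrightarrow> set L = S \<longrightarrow> length L = 2*m \<longrightarrow>
         j \<in> E' - S \<longrightarrow> j' \<in> E' - S \<longrightarrow> 0 < F' (L@[j]) * F' (L@[j'])"
      proof (intro allI impI)
        fix S L j j'
        assume pS: "pu E' S" and sL: "sorted_wrt (<) L" and setL: "set L = S" and lL: "length L = 2*m"
          and j: "j \<in> E' - S" and j': "j' \<in> E' - S"
        have sub: "set L \<subseteq> E - {a,b}" using pu_subset[OF pS] setL unfolding E'_def by simp
        note p = ins_props[OF sL sub ab]
        have pS2: "pu E (insert a (insert b S))" using pu_step[OF pS[unfolded E'_def] ab] .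
        have "0 < F (ins a b L @ [j]) * F (ins a b L @ [j'])"
          using fac[rule_format, OF pS2 p(1)] p(2,3) setL lL j j' unfolding E'_def by auto
        moreover have "F (ins a b L @ [j]) = F (a # b # L @ [j])"
          by (rule ins_F[OF ch sL sub ab]) (use lL in \<open>simp add: k_def\<close>)
        moreover have "F (ins a b L @ [j']) = F (a # b # L @ [j'])"
          by (rule ins_F[OF ch sL sub ab]) (use lL in \<open>simp add: k_def\<close>)
        ultimately show "0 < F' (L@[j]) * F' (L@[j'])" unfolding F'_def by simp
      qed
      have IH: "\<forall>L L'. sl E' (2*m+1) L \<longrightarrow> sl E' (2*m+1) L' \<longrightarrow> 0 < F' L * F' L'"
        using Suc.IH ch' fin' cE' nz' fac' by blast
      have betw: "\<forall>z\<in>set L. \<not> (a < z \<and> z < b)" if "set L \<subseteq> E" for L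
        using that ab unfolding cons_def by auto
      obtain X1 Y1 where XY1: "L1 = X1 @ [a,b] @ Y1"
        using split_cons[of L1 a b] L1 abE betw unfolding sl_def by blast
      obtain X2 Y2 where XY2: "L2 = X2 @ [a,b] @ Y2"
        using split_cons[of L2 a b] L2 abE betw unfolding sl_def by blast
      have s1: "sl E' (2*m+1) (X1 @ Y1)" using sl_remove_pair[of E k X1 a b Y1] L1(1) XY1
        unfolding E'_def by (simp add: k_def)
      have s2: "sl E' (2*m+1) (X2 @ Y2)" using sl_remove_pair[of E k X2 a b Y2] L2(1) XY2
        unfolding E'_def by (simp add: k_def)
      have l1: "length X1 + length Y1 + 2 = k" using L1(1) XY1 unfolding sl_def by simp
      have l2: "length X2 + length Y2 + 2 = k" using L2(1) XY2 unfolding sl_def by simp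
      have "F L1 = F' (X1 @ Y1)" unfolding XY1 F'_def by (rule pair_move[OF ch l1])
      moreover have "F L2 = F' (X2 @ Y2)" unfolding XY2 F'_def by (rule pair_move[OF ch l2])
      ultimately show ?thesis using IH s1 s2 by simp
    qed
    have k3: "3 \<le> k" by (simp add: k_def)
    have cEk: "k \<le> card E" using cE k_def by simp
    have Ene: "E \<noteq> {}" using cEk k3 by auto
    define e0 where "e0 = Min E"
    have e0: "e0 \<in> E" "\<forall>z\<in>E. e0 \<le> z" unfolding e0_def using fin Ene by auto
    have Ene1: "E - {e0} \<noteq> {}"
    proof
      assume "E - {e0} = {}"
      then have "E = {e0}" using e0 by auto
      then show False using cEk k3 by simp
    qed
    define e1 where "e1 = Min (E - {e0})"
    have e1a: "e1 \<in> E - {e0}" unfolding e1_def using fin Ene1 by (intro Min_in) auto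
    have e1b: "\<forall>z\<in>E - {e0}. e1 \<le> z" unfolding e1_def using fin by (auto intro: Min_le)
    note e1 = e1a e1b
    have e01: "e0 < e1" using e0 e1 by force
    have "\<forall>z\<in>E. \<not> (e0 < z \<and> z < e1)"
    proof (intro ballI notI)
      fix z assume z: "z \<in> E" "e0 < z \<and> z < e1"
      then have "e1 \<le> z" using e1b by auto
      then show False using z by simp
    qed
    then have ce: "cons E e0 e1" unfolding cons_def using e0 e1a e01 by auto
    have "card {e0, e1} \<le> k" using k3 by (simp add: card_insert_if)
    then obtain Lref where Lref: "sl E k Lref" "{e0,e1} \<subseteq> set Lref"
      using exlist[OF fin cEk, of "{e0,e1}"] e0 e1 by auto
    have C2: "\<forall>b L. cons E a b \<longrightarrow> sl E k L \<longrightarrow> a \<in> set L \<longrightarrow> b \<in> set L \<longrightarrow> 0 < F L * F Lref" for a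
    proof (induction a rule: less_induct)
      case (less a)
      show ?case
      proof (intro allI impI)
        fix b L assume ab: "cons E a b" and L: "sl E k L" "a \<in> set L" "b \<in> set L"
        have abE: "a \<in> E" "b \<in> E" "a < b" using ab unfolding cons_def by auto
        show "0 < F L * F Lref"
        proof (cases "a = e0")
          case True
          have "b = e1"
          proof (rule ccontr)
            assume "b \<noteq> e1"
            have "e1 \<le> b" using e1 abE True by auto
            then have "e1 < b" using \<open>b \<noteq> e1\<close> by simp
            then show False using ab e1 e01 True unfolding cons_def by auto
          qed
          then show ?thesis using C1[OF ab L] Lref True by auto
        next
          case False
          then have "e0 < a" using e0 abE by force
          define a' where "a' = Max {z\<in>E. z < a}"
          note pc = pred_cons[OF fin e0(1) \<open>e0 < a\<close> abE(1), folded a'_def]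
          have "card {a', a, b} \<le> k" using card3[of a' a b] k3 by simp
          then obtain L3 where L3: "sl E k L3" "{a', a, b} \<subseteq> set L3"
            using exlist[OF fin cEk, of "{a',a,b}"] pc abE by auto
          have "0 < F L3 * F Lref" using less.IH[OF pc(2)] pc(4) L3 by auto
          moreover have "0 < F L * F L3" using C1[OF ab L] L3 by auto
          ultimately show ?thesis using sign_trans by blast
        qed
      qed
    qed
    have C3: "\<forall>L. sum_list L = N \<longrightarrow> sl E k L \<longrightarrow> 0 < F L * F Lref" for N
    proof (induction N rule: less_induct)
      case (less N)
      show ?case
      proof (intro allI impI)
        fix L assume sN: "sum_list L = N" and L: "sl E k L"
        show "0 < F L * F Lref"
        proof (cases "\<exists>a b. cons E a b \<and> a \<in> set L \<and> b \<in> set L")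
          case True
          then show ?thesis using C2 L by blast
        next
          case False
          have "length L = Suc (Suc (Suc (2*m)))" using L unfolding sl_def k_def by simp
          then obtain a0 p q R where Lf: "L = a0 # p # q # R"
            by (metis length_Suc_conv)
          have sL: "sorted_wrt (<) L" "set L \<subseteq> E" using L unfolding sl_def by auto
          have ord: "a0 < p" "p < q" "\<forall>r\<in>set R. q < r" "sorted_wrt (<) R" using sL(1) unfolding Lf by auto
          have inE: "a0 \<in> E" "p \<in> E" "q \<in> E" "set R \<subseteq> E" using sL(2) unfolding Lf by auto
          define u where "u = Max {z\<in>E. z < p}"
          note pu' = pred_cons[OF fin inE(1) ord(1) inE(2), folded u_def]
          define w where "w = Max {z\<in>E. z < q}"
          have "p < q" using ord by simp
          note pw = pred_cons[OF fin inE(2) this inE(3), folded w_def]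
          have "u \<noteq> a0" using False pu'(4) unfolding Lf by auto
          then have a0u: "a0 < u" using pu'(3) by simp
          have "w \<noteq> p" using False pw(4) unfolding Lf by auto
          then have pw': "p < w" using pw(3) by simp
          have lR: "length R + 3 = k" using L unfolding sl_def Lf by simp
          have slx: "sl E k (a0 # x # y # R)" if "a0 < x" "x < y" "y < q" "x \<in> E" "y \<in> E" for x y
            using that ord inE lR unfolding sl_def by auto
          define B1 where "B1 = a0 # u # w # R"
          define B2 where "B2 = a0 # u # p # R"
          define B3 where "B3 = a0 # w # q # R"
          define B4 where "B4 = a0 # p # w # R"
          define B5 where "B5 = a0 # u # q # R"
          have sB1: "sl E k B1" unfolding B1_def using slx a0u pu' pw pw' by auto
          have sB2: "sl E k B2" unfolding B2_def using slx a0u pu' pw pw' ord inE by auto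
          have sB4: "sl E k B4" unfolding B4_def using slx a0u pu' pw pw' ord inE by auto
          have sB3: "sl E k B3" unfolding sl_def B3_def using ord inE lR a0u pu' pw pw' by auto
          have sB5: "sl E k B5" unfolding sl_def B5_def using ord inE lR a0u pu' pw pw' by auto
          have r2: "0 < F B2 * F Lref" using C2 pu'(4) sB2 unfolding B2_def by auto
          have r3: "0 < F B3 * F Lref" using C2 pw(4) sB3 unfolding B3_def by auto
          have r1: "0 < F B1 * F Lref" using less.IH[of "sum_list B1"] sB1 pu' pw sN
            unfolding B1_def Lf by auto
          have r4: "0 < F B4 * F Lref" using less.IH[of "sum_list B4"] sB4 pu' pw sN
            unfolding B4_def Lf by auto
          have r5: "0 < F B5 * F Lref" using less.IH[of "sum_list B5"] sB5 pu' pw sN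
            unfolding B5_def Lf by auto
          define T where "T = a0 # R"
          have lT: "length T + 2 = k" using lR unfolding T_def by simp
          have mv: "F (a0 # x # y # R) = F (T @ [x,y])" for x y
          proof -
            have "F ([a0] @ [x,y] @ R) = F (x # y # [a0] @ R)"
              by (rule pair_move[OF ch]) (use lR in simp)
            moreover have "F (T @ [x,y] @ []) = F (x # y # T @ [])"
              by (rule pair_move[OF ch]) (use lT in simp)
            ultimately show ?thesis unfolding T_def by simp
          qed
          have sw: "F (T @ [x,y]) = - F (T @ [y,x])" for x y
            using chiro_swap[OF ch, of T "[]" x y] lT by simp
          have gp: "F (T@[p,q]) * F (T@[u,w]) - F (T@[p,u]) * F (T@[q,w]) + F (T@[p,w]) * F (T@[q,u]) = 0"
            by (rule chiro_gp[OF ch lT])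
          have eq: "F L * F B1 = F B2 * F B3 + F B4 * F B5"
            using gp sw[of p u] sw[of q w] sw[of q u] unfolding Lf B1_def B2_def B3_def B4_def B5_def mv
            by (simp add: algebra_simps)
          define r where "r = F Lref"
          have "(F L * F B1) * (r * r) = (F B2 * r) * (F B3 * r) + (F B4 * r) * (F B5 * r)"
            unfolding eq by (simp add: algebra_simps)
          also have "\<dots> > 0" using r2 r3 r4 r5 unfolding r_def by (simp add: add_pos_pos)
          finally have pos: "0 < (F L * F B1) * (r * r)" .
          have "0 < F L * F B1"
          proof (rule ccontr)
            assume "\<not> 0 < F L * F B1"
            then have "(F L * F B1) * (r * r) \<le> 0" by (simp add: mult_nonpos_nonneg)
            then show False using pos by linarith
          qed
          then show ?thesis using r1 sign_trans by blast
        qed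
      qed
    qed
    have "0 < F LL * F Lref" "0 < F LL' * F Lref" using C3 LL LL' unfolding k_def by auto
    then show "0 < F LL * F LL'" using sign_trans[of "F LL" "F Lref" "F LL'"] by (simp add: mult.commute)
  qed
qed


lemma pu_facet:
  "pu E S \<Longrightarrow> \<forall>F k L j. chiro k F \<longrightarrow> (\<forall>M. sl E k M \<longrightarrow> 0 < c * F M) \<longrightarrow> sorted_wrt (<) L \<longrightarrow>
      set L = S \<longrightarrow> length L + 1 = k \<longrightarrow> j \<in> E - S \<longrightarrow> 0 < c * F (L @ [j])"
proof (induction rule: pu.induct)
  case (pu_empty E)
  show ?case
  proof (intro allI impI)
    fix F k and L :: "nat list" and j :: nat
    assume pos: "\<forall>M. sl E k M \<longrightarrow> 0 < c * F M" and "set L = {}" "length L + 1 = k" "j \<in> E - {}"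
    then have "L = []" "k = 1" "j \<in> E" by auto
    then show "0 < c * F (L @ [j])" using pos unfolding sl_def by auto
  qed
next
  case (pu_step E a b S)
  show ?case
  proof (intro allI impI)
    fix F k and L :: "nat list" and j :: nat
    assume ch: "chiro k F" and pos: "\<forall>M. sl E k M \<longrightarrow> 0 < c * F M" and sL: "sorted_wrt (<) L"
      and setL: "set L = insert a (insert b S)" and lL: "length L + 1 = k"
      and j: "j \<in> E - insert a (insert b S)"
    have ab: "a \<in> E" "b \<in> E" "a < b" using pu_step.hyps(2) unfolding cons_def by auto
    have Ssub: "S \<subseteq> E - {a,b}" using pu_subset[OF pu_step.hyps(1)] .
    have LE: "set L \<subseteq> E" using setL Ssub ab by auto
    have betw: "\<forall>z\<in>set L. \<not> (a < z \<and> z < b)" using LE pu_step.hyps(2) unfolding cons_def by auto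
    obtain X Y where XY: "L = X @ [a,b] @ Y"
      using split_cons[OF sL _ _ ab(3) betw] setL by auto
    have sl0: "sorted_wrt (<) (X @ Y)" "a \<notin> set (X @ Y)" "b \<notin> set (X @ Y)"
      using sL unfolding XY by (auto simp: sorted_wrt_append)
    have set0: "set (X @ Y) = S"
    proof -
      have "set (X @ Y) = set L - {a,b}" using sl0 unfolding XY by auto
      then show ?thesis using setL Ssub by auto
    qed
    obtain k' where kk: "k = Suc (Suc k')" using lL XY by (cases k; cases "k - 1") auto
    have ch': "chiro k' (\<lambda>M. F (a # b # M))" using chiro_contract[OF ch[unfolded kk]] .
    have pos': "\<forall>M. sl (E - {a,b}) k' M \<longrightarrow> 0 < c * F (a # b # M)"
    proof (intro allI impI)
      fix M assume "sl (E - {a,b}) k' M"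
      then have s: "sorted_wrt (<) M" "set M \<subseteq> E - {a,b}" "length M = k'" unfolding sl_def by auto
      note p = ins_props[OF s(1,2) pu_step.hyps(2)]
      have "sl E k (ins a b M)" unfolding sl_def using p s ab kk by auto
      then have "0 < c * F (ins a b M @ [])" using pos by simp
      moreover have "F (ins a b M @ []) = F (a # b # M @ [])"
        by (rule ins_F[OF ch s(1,2) pu_step.hyps(2)]) (use s kk in simp)
      ultimately show "0 < c * F (a # b # M)" by simp
    qed
    have "0 < c * F (a # b # (X @ Y) @ [j])"
      using pu_step.IH[rule_format, OF ch' pos'[rule_format] sl0(1) set0, of j] lL XY kk j by auto
    moreover have "F (X @ [a,b] @ (Y @ [j])) = F (a # b # X @ Y @ [j])"
      by (rule pair_move[OF ch]) (use lL XY in simp)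
    ultimately show "0 < c * F (L @ [j])" unfolding XY by simp
  qed
qed

lemma pu_interval: "{a..<a+2*m} \<subseteq> E \<Longrightarrow> pu E {a..<a+2*m}"
proof (induction m arbitrary: E)
  case 0 then show ?case using pu_empty by simp
next
  case (Suc m)
  have eq: "{a..<a+2*Suc m} = insert (a+2*m) (insert (a+2*m+1) {a..<a+2*m})" by auto
  have c: "cons E (a+2*m) (a+2*m+1)" using Suc.prems unfolding cons_def by auto
  have "pu (E - {a+2*m, a+2*m+1}) {a..<a+2*m}" by (rule Suc.IH) (use Suc.prems in auto)
  then show ?case unfolding eq by (rule pu_step[OF _ c])
qed

lemma ins_abs:
  assumes "chiro k F"
  shows "length P + 1 + length M = k \<Longrightarrow> \<bar>F (P @ x # M)\<bar> = \<bar>F (P @ insort x M)\<bar>"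
proof (induction M arbitrary: P)
  case Nil then show ?case by simp
next
  case (Cons y M)
  show ?case
  proof (cases "x \<le> y")
    case True then show ?thesis by simp
  next
    case False
    have "F (P @ [x,y] @ M) = - F (P @ [y,x] @ M)" by (rule chiro_swap[OF assms]) (use Cons.prems in simp)
    then have "\<bar>F (P @ x # y # M)\<bar> = \<bar>F ((P @ [y]) @ x # M)\<bar>" by simp
    also have "\<dots> = \<bar>F ((P @ [y]) @ insort x M)\<bar>" by (rule Cons.IH) (use Cons.prems in simp)
    finally show ?thesis using False by simp
  qed
qed

lemma sort_abs:
  assumes "chiro k F"
  shows "length P + length L = k \<Longrightarrow> \<bar>F (P @ L)\<bar> = \<bar>F (P @ sort L)\<bar>"
proof (induction L arbitrary: P)
  case Nil then show ?case by simp
next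
  case (Cons x L)
  have "\<bar>F (P @ x # L)\<bar> = \<bar>F ((P @ [x]) @ L)\<bar>" by simp
  also have "\<dots> = \<bar>F ((P @ [x]) @ sort L)\<bar>" by (rule Cons.IH) (use Cons.prems in simp)
  also have "\<dots> = \<bar>F (P @ x # sort L)\<bar>" by simp
  also have "\<dots> = \<bar>F (P @ insort x (sort L))\<bar>" by (rule ins_abs[OF assms]) (use Cons.prems in simp)
  finally show ?case by simp
qed

lemma nonzero_distinct:
  assumes "chiro k F" "\<forall>L. sl E k L \<longrightarrow> F L \<noteq> 0" "distinct L" "set L \<subseteq> E" "length L = k"
  shows "F L \<noteq> 0"
proof -
  have "\<bar>F ([] @ L)\<bar> = \<bar>F ([] @ sort L)\<bar>" by (rule sort_abs[OF assms(1)]) (use assms in simp)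
  moreover have "sl E k (sort L)" unfolding sl_def using assms(3-5)
    by (simp add: strict_sorted_iff)
  ultimately show ?thesis using assms(2) by force
qed


definition cm :: "nat \<Rightarrow> real Matrix.vec list \<Rightarrow> real mat" where
  "cm K cs = Matrix.mat K K (\<lambda>(i,j). (cs ! j) $ i)"

definition Dt :: "nat \<Rightarrow> real Matrix.vec list \<Rightarrow> real" where
  "Dt K cs = Determinant.det (cm K cs)"

lemma cm_carrier[simp]: "cm K cs \<in> carrier_mat K K"
  unfolding cm_def by simp

lemma leibniz_det_eq: "leibniz_det k A = Determinant.det (Matrix.mat k k (\<lambda>(i,j). A i j))"
  unfolding leibniz_det_def Determinant.det_def
  by (simp add: atLeast0LessThan)

lemma Dt_swap:
  assumes "length cs = K" "i < K" "j < K" "i \<noteq> j"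
  shows "Dt K (cs[i := cs!j, j := cs!i]) = - Dt K cs"
proof -
  have "cm K (cs[i := cs!j, j := cs!i]) = swapcols i j (cm K cs)"
    by (rule eq_matI) (use assms in \<open>auto simp: cm_def mat_swapcols_def nth_list_update\<close>)
  thus ?thesis unfolding Dt_def using det_swapcols[OF assms(2-4) cm_carrier] by simp
qed

lemma Dt_rep:
  assumes "length cs = K" "i < K" "j < K" "i \<noteq> j" "cs ! i = cs ! j"
  shows "Dt K cs = 0"
proof -
  have "col (cm K cs) i = col (cm K cs) j"
    by (rule eq_vecI) (use assms in \<open>auto simp: cm_def col_def\<close>)
  thus ?thesis unfolding Dt_def using det_identical_columns[OF cm_carrier assms(4,2,3)] by simp
qed

lemma Dt_lin:
  assumes "length cs = K" "k < K"
  shows "\<exists>C. \<forall>b. Dt K (cs[k := b]) = (\<Sum>i<K. b $ i * C i)"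
proof (intro exI allI)
  fix b
  let ?A = "cm K (cs[k := b])"
  have "Dt K (cs[k := b]) = (\<Sum>i<K. ?A $$ (i,k) * cofactor ?A i k)"
    unfolding Dt_def by (rule laplace_expansion_column[OF cm_carrier assms(2)])
  also have "\<dots> = (\<Sum>i<K. b $ i * cofactor (cm K cs) i k)"
  proof (rule sum.cong[OF refl])
    fix i assume i: "i \<in> {..<K}"
    have "mat_delete ?A i k = mat_delete (cm K cs) i k"
      by (rule eq_matI) (use assms i in \<open>auto simp: cm_def mat_delete_def nth_list_update\<close>)
    thus "?A $$ (i,k) * cofactor ?A i k = b $ i * cofactor (cm K cs) i k"
      using assms i by (simp add: cofactor_def cm_def)
  qed
  finally show "Dt K (cs[k := b]) = (\<Sum>i<K. b $ i * cofactor (cm K cs) i k)" .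
qed

lemma Dt_expand:
  assumes "length X = K" "k < K" "length cs = K" "v \<in> carrier_vec K"
  shows "Dt K (X[k := cm K cs *\<^sub>v v]) = (\<Sum>j<K. v $ j * Dt K (X[k := cs ! j]))"
proof -
  obtain C where C: "\<And>b. Dt K (X[k := b]) = (\<Sum>i<K. b $ i * C i)"
    using Dt_lin[OF assms(1,2)] by blast
  have mv: "(cm K cs *\<^sub>v v) $ i = (\<Sum>j<K. (cs!j) $ i * v $ j)" if "i < K" for i
    using that assms(4) by (simp add: cm_def scalar_prod_def Matrix.row_def atLeast0LessThan)
  have "Dt K (X[k := cm K cs *\<^sub>v v]) = (\<Sum>i<K. (\<Sum>j<K. (cs!j) $ i * v $ j) * C i)"
    unfolding C by (rule sum.cong, simp_all add: mv)
  also have "\<dots> = (\<Sum>i<K. \<Sum>j<K. v $ j * ((cs ! j) $ i * C i))"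
    by (simp add: sum_distrib_left sum_distrib_right mult_ac)
  also have "\<dots> = (\<Sum>j<K. \<Sum>i<K. v $ j * ((cs ! j) $ i * C i))"
    by (rule sum.swap)
  also have "\<dots> = (\<Sum>j<K. v $ j * (\<Sum>i<K. (cs ! j) $ i * C i))"
    by (simp add: sum_distrib_left)
  also have "\<dots> = (\<Sum>j<K. v $ j * Dt K (X[k := cs ! j]))" unfolding C ..
  finally show ?thesis .
qed

lemma Dt_solve:
  assumes "Dt K cs \<noteq> 0" "b \<in> carrier_vec K"
  shows "\<exists>v \<in> carrier_vec K. cm K cs *\<^sub>v v = b"
proof -
  let ?A = "cm K cs"
  let ?d = "Determinant.det ?A"
  have d: "?d \<noteq> 0" using assms unfolding Dt_def by simp
  note adj = adj_mat[OF cm_carrier[of K cs]]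
  define v where "v = (1 / ?d) \<cdot>\<^sub>v (adj_mat ?A *\<^sub>v b)"
  have vc: "v \<in> carrier_vec K" unfolding v_def using adj assms by auto
  have "?A *\<^sub>v v = (1 / ?d) \<cdot>\<^sub>v (?A *\<^sub>v (adj_mat ?A *\<^sub>v b))"
    unfolding v_def by (rule mult_mat_vec[OF cm_carrier]) (use adj assms in auto)
  also have "?A *\<^sub>v (adj_mat ?A *\<^sub>v b) = (?A * adj_mat ?A) *\<^sub>v b"
    by (rule assoc_mult_mat_vec[symmetric, OF cm_carrier adj(1) assms(2)])
  also have "\<dots> = ?d \<cdot>\<^sub>v b" unfolding adj(2) using assms by auto
  finally have "?A *\<^sub>v v = b" using d assms by (auto simp: smult_smult_assoc)
  thus ?thesis using vc by blast
qed

lemma Dt_cramer: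
  assumes "length cs = K" "k < K" "v \<in> carrier_vec K"
  shows "Dt K (cs[k := cm K cs *\<^sub>v v]) = v $ k * Dt K cs"
proof -
  have "replace_col (cm K cs) (cm K cs *\<^sub>v v) k = cm K (cs[k := cm K cs *\<^sub>v v])"
    by (rule eq_matI) (use assms in \<open>auto simp: cm_def replace_col_def nth_list_update\<close>)
  thus ?thesis using cramer_lemma_mat[OF cm_carrier[of K cs] assms(3,2)] unfolding Dt_def by simp
qed


lemma Dt_GP1:
  assumes "length T + 2 = K" "b \<in> carrier_vec K" "Dt K (T@[a,c]) \<noteq> 0"
  shows "Dt K (T@[a,b]) * Dt K (T@[c,e]) - Dt K (T@[a,c]) * Dt K (T@[b,e]) + Dt K (T@[a,e]) * Dt K (T@[b,c]) = 0"
proof -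
  define W where "W = T@[a,c]"
  define V where "V = T@[a,e]"
  define n where "n = length T"
  have lW: "length W = K" and lV: "length V = K" using assms(1) by (simp_all add: W_def V_def)
  have nK: "Suc n < K" using assms(1) n_def by simp
  obtain v where v: "v \<in> carrier_vec K" "cm K W *\<^sub>v v = b" using Dt_solve[OF assms(3)[folded W_def] assms(2)] by blast
  have e1: "T@[a,b] = W[Suc n := b]" by (simp add: W_def n_def list_update_append)
  have e2: "T@[b,e] = V[n := b]" by (simp add: V_def n_def list_update_append)
  have e3: "T@[b,c] = W[n := b]" by (simp add: W_def n_def list_update_append)
  have x1: "Dt K (W[Suc n := b]) = (\<Sum>j<K. v$j * Dt K (W[Suc n := W!j]))"
    unfolding v(2)[symmetric] by (rule Dt_expand[OF lW nK lW v(1)])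
  have x2: "Dt K (V[n := b]) = (\<Sum>j<K. v$j * Dt K (V[n := W!j]))"
    unfolding v(2)[symmetric] by (rule Dt_expand[OF lV _ lW v(1)]) (use nK in simp)
  have x3: "Dt K (W[n := b]) = (\<Sum>j<K. v$j * Dt K (W[n := W!j]))"
    unfolding v(2)[symmetric] by (rule Dt_expand[OF lW _ lW v(1)]) (use nK in simp)
  have z: "Dt K (W[Suc n := W!j]) * Dt K (T@[c,e]) - Dt K W * Dt K (V[n := W!j]) + Dt K V * Dt K (W[n := W!j]) = 0"
    if j: "j < K" for j
  proof -
    consider "j < n" | "j = n" | "j = Suc n" using j assms(1) n_def by linarith
    then show ?thesis
    proof cases
      case 1
      have Wj: "W ! j = T ! j" using 1 by (simp add: W_def n_def nth_append)
      have a1: "Dt K (W[Suc n := W!j]) = 0"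
        by (rule Dt_rep[of _ K j "Suc n"]) (use 1 nK lW Wj in \<open>simp_all add: W_def n_def nth_append nth_list_update\<close>)
      have a2: "Dt K (V[n := W!j]) = 0"
        by (rule Dt_rep[of _ K j n]) (use 1 nK lV Wj in \<open>simp_all add: V_def n_def nth_append nth_list_update\<close>)
      have a3: "Dt K (W[n := W!j]) = 0"
        by (rule Dt_rep[of _ K j n]) (use 1 nK lW Wj in \<open>simp_all add: W_def n_def nth_append nth_list_update\<close>)
      show ?thesis by (simp add: a1 a2 a3)
    next
      case 2
      have Wj: "W ! j = a" using 2 by (simp add: W_def n_def nth_append)
      have a1: "Dt K (W[Suc n := W!j]) = 0"
        by (rule Dt_rep[of _ K n "Suc n"]) (use 2 nK lW Wj in \<open>simp_all add: W_def n_def nth_append nth_list_update\<close>)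
      have a2: "V[n := W!j] = V" using Wj 2 by (simp add: V_def n_def list_update_append)
      have a3: "W[n := W!j] = W" using Wj 2 by (simp add: W_def n_def list_update_append)
      show ?thesis by (simp add: a1 a2 a3)
    next
      case 3
      have Wj: "W ! j = c" using 3 by (simp add: W_def n_def nth_append)
      have a1: "W[Suc n := W!j] = W" using Wj 3 by (simp add: W_def n_def list_update_append)
      have a2: "V[n := W!j] = T@[c,e]" using Wj 3 by (simp add: V_def n_def list_update_append)
      have a3: "Dt K (W[n := W!j]) = 0"
        by (rule Dt_rep[of _ K n "Suc n"]) (use 3 nK lW Wj in \<open>simp_all add: W_def n_def nth_append nth_list_update\<close>)
      show ?thesis by (simp add: a1 a2 a3)
    qed
  qed
  have "Dt K (T@[a,b]) * Dt K (T@[c,e]) - Dt K (T@[a,c]) * Dt K (T@[b,e]) + Dt K (T@[a,e]) * Dt K (T@[b,c])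
     = (\<Sum>j<K. v$j * Dt K (W[Suc n := W!j])) * Dt K (T@[c,e]) - Dt K W * (\<Sum>j<K. v$j * Dt K (V[n := W!j]))
       + Dt K V * (\<Sum>j<K. v$j * Dt K (W[n := W!j]))"
    unfolding e1 e2 e3 x1 x2 x3 by (simp add: W_def V_def)
  also have "\<dots> = (\<Sum>j<K. v$j * (Dt K (W[Suc n := W!j]) * Dt K (T@[c,e]) - Dt K W * Dt K (V[n := W!j]) + Dt K V * Dt K (W[n := W!j])))"
    by (simp add: sum_distrib_left sum_distrib_right sum.distrib sum_subtractf algebra_simps)
  also have "\<dots> = 0" by (rule sum.neutral) (simp add: z)
  finally show ?thesis .
qed

lemma Dt_swap_last:
  assumes "length T + 2 = K"
  shows "Dt K (T@[x,y]) = - Dt K (T@[y,x])"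
proof -
  have "(T@[y,x])[length T := (T@[y,x]) ! Suc (length T), Suc (length T) := (T@[y,x]) ! length T] = T@[x,y]"
    by (simp add: list_update_append nth_append)
  thus ?thesis using Dt_swap[of "T@[y,x]" K "length T" "Suc (length T)"] assms by simp
qed

lemma Dt_GP:
  assumes "length T + 2 = K" "b \<in> carrier_vec K"
  shows "Dt K (T@[a,b]) * Dt K (T@[c,e]) - Dt K (T@[a,c]) * Dt K (T@[b,e]) + Dt K (T@[a,e]) * Dt K (T@[b,c]) = 0"
proof -
  note sw = Dt_swap_last[OF assms(1)]
  consider "Dt K (T@[a,c]) \<noteq> 0" | "Dt K (T@[a,e]) \<noteq> 0" | "Dt K (T@[c,e]) \<noteq> 0"
    | "Dt K (T@[a,c]) = 0" "Dt K (T@[a,e]) = 0" "Dt K (T@[c,e]) = 0" by blast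
  then show ?thesis
  proof cases
    case 1 show ?thesis by (rule Dt_GP1[OF assms 1])
  next
    case 2
    have "Dt K (T@[a,b]) * Dt K (T@[e,c]) - Dt K (T@[a,e]) * Dt K (T@[b,c]) + Dt K (T@[a,c]) * Dt K (T@[b,e]) = 0"
      by (rule Dt_GP1[OF assms 2])
    then show ?thesis using sw[of e c] by (simp add: algebra_simps)
  next
    case 3
    have "Dt K (T@[c,b]) * Dt K (T@[e,a]) - Dt K (T@[c,e]) * Dt K (T@[b,a]) + Dt K (T@[c,a]) * Dt K (T@[b,e]) = 0"
      by (rule Dt_GP1[OF assms 3])
    then show ?thesis using sw[of e a] sw[of c b] sw[of b a] sw[of c a] by (simp add: algebra_simps)
  next
    case 4 then show ?thesis using sw[of c e] by simp
  qed
qed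

lemma chiro_Dt:
  assumes "\<And>i. f i \<in> carrier_vec K"
  shows "chiro K (\<lambda>L. Dt K (map f L))"
  unfolding chiro_def
proof (intro conjI allI impI)
  fix X Y :: "nat list" and a b :: nat
  assume l: "length X + length Y + 2 = K"
  let ?cs = "map f (X@[b,a]@Y)"
  have "?cs[length X := ?cs ! Suc (length X), Suc (length X) := ?cs ! length X] = map f (X@[a,b]@Y)"
    by (simp add: list_update_append nth_append)
  then show "Dt K (map f (X @ [a, b] @ Y)) = - Dt K (map f (X @ [b, a] @ Y))"
    using Dt_swap[of ?cs K "length X" "Suc (length X)"] l by simp
next
  fix T :: "nat list" and a b c e :: nat
  assume l: "length T + 2 = K"
  show "Dt K (map f (T @ [a, b])) * Dt K (map f (T @ [c, e])) - Dt K (map f (T @ [a, c])) * Dt K (map f (T @ [b, e])) +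
       Dt K (map f (T @ [a, e])) * Dt K (map f (T @ [b, c])) = 0"
    using Dt_GP[of "map f T" K "f b" "f a" "f c" "f e"] l assms by simp
qed


lemma coord_enum_bij: "bij_betw (coord_enum :: nat \<Rightarrow> 'd::finite) {..<CARD('d)} UNIV"
proof -
  have "\<exists>e. bij_betw e {..<CARD('d)} (UNIV::'d set)"
    using ex_bij_betw_nat_finite[of "UNIV::'d set"] by (auto simp: atLeast0LessThan)
  then show ?thesis unfolding coord_enum_def by (rule someI_ex)
qed

definition lift :: "real^'d::finite \<Rightarrow> real Matrix.vec" where
  "lift z = Matrix.vec (CARD('d)+1) (\<lambda>i. if i = 0 then 1 else z $ coord_enum (i - 1))"

lemma lift_carrier[simp]: "lift (z::real^'d::finite) \<in> carrier_vec (CARD('d)+1)"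
  unfolding lift_def by simp

lemma lift_0[simp]: "lift z $ 0 = 1"
  unfolding lift_def by simp

lemma lift_Suc: "r < CARD('d) \<Longrightarrow> lift (z::real^'d::finite) $ Suc r = z $ coord_enum r"
  unfolding lift_def by simp

lemma lift_comb:
  assumes "i < CARD('d)+1" "u + v = 1"
  shows "lift (u *\<^sub>R z1 + v *\<^sub>R (z2::real^'d::finite)) $ i = u * lift z1 $ i + v * lift z2 $ i"
  using assms unfolding lift_def by auto

lemma max_minor_Dt:
  "max_minor (y :: nat \<Rightarrow> real^'d::finite) c = Dt (CARD('d)+1) (map (lift \<circ> y) (map c [0..<CARD('d)+1]))"
proof -
  have "Matrix.mat (CARD('d)+1) (CARD('d)+1) (\<lambda>(i,j). lifted_entry y i (c j))
        = cm (CARD('d)+1) (map (lift \<circ> y) (map c [0..<CARD('d)+1]))"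
  proof (rule eq_matI)
    fix i j assume ij: "i < dim_row (cm (CARD('d)+1) (map (lift \<circ> y) (map c [0..<CARD('d)+1])))"
      "j < dim_col (cm (CARD('d)+1) (map (lift \<circ> y) (map c [0..<CARD('d)+1])))"
    then have ij': "i < CARD('d)+1" "j < CARD('d)+1" by (simp_all add: cm_def)
    have "map (lift \<circ> y) (map c [0..<CARD('d)+1]) ! j = lift (y (c j))"
      using ij'(2) by (simp del: upt_Suc)
    then show "Matrix.mat (CARD('d)+1) (CARD('d)+1) (\<lambda>(i,j). lifted_entry y i (c j)) $$ (i, j) =
      cm (CARD('d)+1) (map (lift \<circ> y) (map c [0..<CARD('d)+1])) $$ (i, j)"
      using ij' by (simp add: cm_def lifted_entry_def lift_def del: upt_Suc)
  qed (simp_all add: cm_def)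
  then show ?thesis unfolding max_minor_def leibniz_det_eq Dt_def by simp
qed

lemma phi_affine:
  assumes "length cs = CARD('d)" "u + v = 1"
  shows "Dt (CARD('d)+1) (cs @ [lift (u *\<^sub>R z1 + v *\<^sub>R (z2::real^'d::finite))])
       = u * Dt (CARD('d)+1) (cs @ [lift z1]) + v * Dt (CARD('d)+1) (cs @ [lift z2])"
proof -
  let ?K = "CARD('d)+1"
  obtain C where C: "\<And>b. Dt ?K ((cs @ [lift z1])[CARD('d) := b]) = (\<Sum>i<?K. b $ i * C i)"
    using Dt_lin[of "cs @ [lift z1]" ?K "CARD('d)"] assms by auto
  have upd: "(cs @ [lift z1])[CARD('d) := b] = cs @ [b]" for b
    using assms by (simp add: list_update_append)
  have "Dt ?K (cs @ [lift (u *\<^sub>R z1 + v *\<^sub>R z2)]) = (\<Sum>i<?K. (u * lift z1 $ i + v * lift z2 $ i) * C i)"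
    using C[of "lift (u *\<^sub>R z1 + v *\<^sub>R z2)"] unfolding upd
    by (simp add: lift_comb[OF _ assms(2)])
  also have "\<dots> = u * (\<Sum>i<?K. lift z1 $ i * C i) + v * (\<Sum>i<?K. lift z2 $ i * C i)"
    by (simp add: sum_distrib_left sum.distrib algebra_simps)
  also have "\<dots> = u * Dt ?K (cs @ [lift z1]) + v * Dt ?K (cs @ [lift z2])"
    using C[of "lift z1"] C[of "lift z2"] unfolding upd by simp
  finally show ?thesis .
qed

lemma face_from_fun:
  fixes h :: "'a::real_vector \<Rightarrow> real"
  assumes "convex P" "\<forall>z\<in>P. 0 \<le> h z"
    and aff: "\<And>z1 z2 u v. u + v = 1 \<Longrightarrow> h (u *\<^sub>R z1 + v *\<^sub>R z2) = u * h z1 + v * h z2"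
  shows "P \<inter> {z. h z = 0} face_of P"
proof -
  have 1: "P \<inter> {z. h z = 0} \<subseteq> P" by blast
  have "convex {z. h z = 0}" unfolding convex_def using aff by simp
  then have 2: "convex (P \<inter> {z. h z = 0})" using assms(1) by (rule convex_Int[rotated])
  have 3: "\<forall>a\<in>P. \<forall>b\<in>P. \<forall>x\<in>P \<inter> {z. h z = 0}. x \<in> open_segment a b \<longrightarrow>
      a \<in> P \<inter> {z. h z = 0} \<and> b \<in> P \<inter> {z. h z = 0}"
  proof (intro ballI impI)
    fix a b x assume ab: "a \<in> P" "b \<in> P" and x: "x \<in> P \<inter> {z. h z = 0}" and xs: "x \<in> open_segment a b"
    then obtain u where u: "0 < u" "u < 1" "x = (1 - u) *\<^sub>R a + u *\<^sub>R b" by (auto simp: in_segment)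
    have "h x = (1 - u) * h a + u * h b" unfolding u(3) by (rule aff) simp
    moreover have "0 \<le> h a" "0 \<le> h b" using assms(2) ab by auto
    ultimately have hx: "(1 - u) * h a + u * h b = 0" "0 \<le> (1 - u) * h a" "0 \<le> u * h b"
      using x u(1,2) by auto
    then have "(1 - u) * h a = 0" "u * h b = 0" by linarith+
    then have "h a = 0" "h b = 0" using u(1,2) by auto
    then show "a \<in> P \<inter> {z. h z = 0} \<and> b \<in> P \<inter> {z. h z = 0}" using ab by auto
  qed
  show ?thesis unfolding face_of_def using 1 2 3 by blast
qed

lemma convex_ge0:
  fixes h :: "'a::real_vector \<Rightarrow> real"
  assumes aff: "\<And>z1 z2 u v. u + v = 1 \<Longrightarrow> h (u *\<^sub>R z1 + v *\<^sub>R z2) = u * h z1 + v * h z2"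
  shows "convex {z. 0 \<le> h z}" "convex {z. h z = 0}"
proof -
  show "convex {z. 0 \<le> h z}" unfolding convex_def using aff by simp
  show "convex {z. h z = 0}" unfolding convex_def using aff by simp
qed

lemma zero_imp_comb:
  fixes ys :: "(real^'d::finite) list" and w z :: "real^'d"
  assumes "length ys = CARD('d)"
    and nz: "Dt (CARD('d)+1) (map lift ys @ [lift w]) \<noteq> 0"
    and zz: "Dt (CARD('d)+1) (map lift ys @ [lift z]) = 0"
  shows "\<exists>\<mu>. sum \<mu> {..<CARD('d)} = 1 \<and> z = (\<Sum>c<CARD('d). \<mu> c *\<^sub>R ys ! c)"
proof -
  let ?d = "CARD('d)" let ?K = "CARD('d)+1"
  define cs where "cs = map lift ys @ [lift w]"
  have lcs: "length cs = ?K" using assms(1) by (simp add: cs_def)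
  obtain v where v: "v \<in> carrier_vec ?K" "cm ?K cs *\<^sub>v v = lift z"
    using Dt_solve[OF nz[folded cs_def] lift_carrier] by blast
  have "Dt ?K (cs[?d := cm ?K cs *\<^sub>v v]) = v $ ?d * Dt ?K cs"
    by (rule Dt_cramer[OF lcs _ v(1)]) simp
  moreover have "cs[?d := cm ?K cs *\<^sub>v v] = map lift ys @ [lift z]"
  proof -
    have "cs[?d := cm ?K cs *\<^sub>v v] = cs[?d := lift z]" by (simp only: v(2))
    also have "\<dots> = map lift ys @ [lift z]" unfolding cs_def using assms(1) by (simp add: list_update_append)
    finally show ?thesis .
  qed
  ultimately have "v $ ?d * Dt ?K cs = 0" using zz by simp
  then have vd: "v $ ?d = 0" using nz cs_def by simp
  have row: "lift z $ r = (\<Sum>c<?d. v $ c * lift (ys ! c) $ r)" if r: "r < ?K" for r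
  proof -
    have "lift z $ r = (cm ?K cs *\<^sub>v v) $ r" using v(2) by simp
    also have "\<dots> = (\<Sum>c<?K. (cs ! c) $ r * v $ c)"
      using r v(1) by (simp add: cm_def scalar_prod_def Matrix.row_def atLeast0LessThan)
    also have "\<dots> = (\<Sum>c<?d. (cs ! c) $ r * v $ c)" using vd by simp
    also have "\<dots> = (\<Sum>c<?d. v $ c * lift (ys ! c) $ r)"
      by (rule sum.cong) (use assms(1) in \<open>auto simp: cs_def nth_append\<close>)
    finally show ?thesis .
  qed
  have s1: "sum (\<lambda>c. v $ c) {..<?d} = 1" using row[of 0] by simp
  have "z = (\<Sum>c<?d. (v $ c) *\<^sub>R ys ! c)"
  proof (rule Finite_Cartesian_Product.vec_eq_iff[THEN iffD2], rule allI)
    fix l :: 'd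
    obtain r where r: "r < ?d" "coord_enum r = l" using coord_enum_bij[where 'd='d]
      by (metis bij_betw_iff_bijections iso_tuple_UNIV_I lessThan_iff)
    have "z $ l = lift z $ Suc r" using lift_Suc[OF r(1)] r(2) by simp
    also have "\<dots> = (\<Sum>c<?d. v $ c * lift (ys ! c) $ Suc r)" using row[of "Suc r"] r by simp
    also have "\<dots> = (\<Sum>c<?d. v $ c * (ys ! c) $ l)" using lift_Suc[OF r(1)] r(2) by simp
    also have "\<dots> = (\<Sum>c<?d. (v $ c) *\<^sub>R ys ! c) $ l" by (simp add: sum_component)
    finally show "z $ l = (\<Sum>c<?d. (v $ c) *\<^sub>R ys ! c) $ l" .
  qed
  then show ?thesis using s1 by blast
qed


theorem corollary3p11:
  fixes x :: "nat \<Rightarrow> real ^ 'd" and n :: nat and \<pi> :: "nat \<Rightarrow> nat"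
  assumes "even (CARD('d))"
    and "n \<ge> CARD('d) + 1"
    and "minors_same_sign n x"
    and "\<pi> permutes {..<n}"
    and "\<exists>\<sigma>. comb_automorphism (convex hull (x ` {..<n})) \<sigma> \<and> (\<forall>i<n. \<sigma> (x i) = x (\<pi> i))"
  shows "minors_same_sign n (x \<circ> \<pi>)"
proof -
  define d where "d = CARD('d)"
  define K where "K = d + 1"
  define X where "X = x ` {..<n}"
  define P where "P = convex hull X"
  obtain \<sigma> where ca: "comb_automorphism P \<sigma>" and \<sigma>x: "\<forall>i<n. \<sigma> (x i) = x (\<pi> i)"
    using assms(5) unfolding P_def X_def by blast
  define f where "f = lift \<circ> x"
  have fc: "\<And>i. f i \<in> carrier_vec K" unfolding f_def K_def d_def comp_def by (rule lift_carrier)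
  have chf: "chiro K (\<lambda>L. Dt K (map f L))" by (rule chiro_Dt[OF fc])
  have d1: "1 \<le> d" unfolding d_def by (simp add: Suc_leI)
  have nK: "K \<le> n" using assms(2) unfolding K_def d_def .
  have finX: "finite X" unfolding X_def by simp
  have XP: "X \<subseteq> P" unfolding P_def by (rule hull_subset)
  have cvP: "convex P" unfolding P_def by simp

  obtain s0 :: real where s0c: "\<forall>c. strict_mono_on {..d} c \<and> c d < n \<longrightarrow> s0 * max_minor x c > 0"
    using assms(3) unfolding minors_same_sign_def d_def by blast
  have pos: "0 < s0 * Dt K (map f L)" if L: "sl {..<n} K L" for L
  proof -
    have sL: "sorted_wrt (<) L" "set L \<subseteq> {..<n}" "length L = K" using L unfolding sl_def by auto
    have sm: "strict_mono_on {..d} ((!) L)" unfolding strict_mono_on_def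
      using sL(1,3) by (auto simp: sorted_wrt_iff_nth_less K_def)
    have "L ! d \<in> set L" using sL(3) K_def by simp
    then have "L ! d < n" using sL(2) by auto
    then have "s0 * max_minor x ((!) L) > 0" using s0c sm by blast
    moreover have mL: "map ((!) L) [0..<CARD('d)+1] = L" using sL(3) unfolding K_def d_def by (metis map_nth)
    ultimately show ?thesis using max_minor_Dt[of x "(!) L", unfolded mL] unfolding f_def K_def d_def by simp
  qed
  have nzs: "\<forall>L. sl {..<n} K L \<longrightarrow> Dt K (map f L) \<noteq> 0" using pos by fastforce
  have nzD: "Dt K (map f L) \<noteq> 0" if "distinct L" "set L \<subseteq> {..<n}" "length L = K" for L
    using nonzero_distinct[OF chf nzs that] .
  have xinj: "a = b" if ab: "a < n" "b < n" "x a = x b" for a b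
  proof (rule ccontr)
    assume ab': "a \<noteq> b"
    have "card {a,b} \<le> K" using ab' d1 K_def by simp
    then obtain L where L: "sl {..<n} K L" "{a,b} \<subseteq> set L"
      using exlist[of "{..<n}" K "{a,b}"] nK ab by auto
    obtain i where i: "i < length L" "L ! i = a" using L(2) by (auto simp: in_set_conv_nth)
    obtain j where j: "j < length L" "L ! j = b" using L(2) by (auto simp: in_set_conv_nth)
    have lL: "length L = K" using L(1) unfolding sl_def by simp
    have "i \<noteq> j" using i j ab' by auto
    have "Dt K (map f L) = 0"
      by (rule Dt_rep[of _ K i j]) (use i j lL \<open>i \<noteq> j\<close> ab in \<open>simp_all add: f_def\<close>)
    then show False using nzs L(1) by blast
  qed
  have posall: "\<forall>M. sl {..<n} K M \<longrightarrow> 0 < s0 * Dt K (map f M)" using pos by blast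
  have pf: "0 < s0 * Dt K (map f (L @ [j]))"
    if "pu {..<n} S" "sorted_wrt (<) L" "set L = S" "length L + 1 = K" "j \<in> {..<n} - S" for S L j
    using pu_facet[OF that(1), rule_format, OF chf posall[rule_format] that(2-5)] .
  have phiaff: "Dt K (cs @ [lift (u *\<^sub>R z1 + v *\<^sub>R z2)]) = u * Dt K (cs @ [lift z1]) + v * Dt K (cs @ [lift z2])"
    if "length cs = d" "u + v = 1" for cs u v and z1 z2 :: "real^'d"
    using phi_affine[of cs u v z1 z2] that unfolding K_def d_def by simp
  have mapf: "map f (L @ [j]) = map f L @ [lift (x j)]" for L j by (simp add: f_def)

  have hfacts: "(\<forall>j<n. j \<notin> S \<longrightarrow> 0 < h (x j)) \<and> (\<forall>s\<in>S. h (x s) = 0) \<and> (\<forall>z\<in>P. 0 \<le> h z) \<and>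
      (\<forall>z1 z2 u v. u + v = 1 \<longrightarrow> h (u *\<^sub>R z1 + v *\<^sub>R z2) = u * h z1 + v * h z2)"
    if puS: "pu {..<n} S" and sL: "sorted_wrt (<) L" and setL: "set L = S" and lL: "length L = d"
      and hdef: "h = (\<lambda>z. s0 * Dt K (map f L @ [lift z]))" for S L h
  proof -
    have hp: "\<forall>j<n. j \<notin> S \<longrightarrow> 0 < h (x j)"
      using pf[OF puS sL setL] lL unfolding hdef K_def mapf by auto
    have hz: "\<forall>s\<in>S. h (x s) = 0"
    proof
      fix s assume "s \<in> S"
      then obtain i where i: "i < length L" "L ! i = s" using setL by (auto simp: in_set_conv_nth)
      have "Dt K (map f L @ [lift (x s)]) = 0"
        by (rule Dt_rep[of _ K i d]) (use i lL in \<open>simp_all add: K_def f_def nth_append\<close>)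
      then show "h (x s) = 0" unfolding hdef by simp
    qed
    have ha: "\<forall>z1 z2 u v. u + v = 1 \<longrightarrow> h (u *\<^sub>R z1 + v *\<^sub>R z2) = u * h z1 + v * h z2"
      unfolding hdef using phiaff lL by (simp add: algebra_simps)
    have "convex {z. 0 \<le> h z}" by (rule convex_ge0(1)) (use ha in blast)
    moreover have "X \<subseteq> {z. 0 \<le> h z}"
    proof
      fix z assume "z \<in> X"
      then obtain j where "j < n" "z = x j" unfolding X_def by auto
      then show "z \<in> {z. 0 \<le> h z}" using hp hz by (cases "j \<in> S") (auto intro: less_imp_le)
    qed
    ultimately have "P \<subseteq> {z. 0 \<le> h z}" unfolding P_def by (rule hull_minimal[rotated])
    then show ?thesis using hp hz ha by auto
  qed

  have face_pu: "\<exists>F. F face_of P \<and> F \<inter> X = x ` S" if puS: "pu {..<n} S" and cS: "card S = d" for S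
  proof -
    have Sn: "S \<subseteq> {..<n}" using pu_subset[OF puS] .
    then have fS: "finite S" using finite_subset by blast
    obtain L where L: "sorted_wrt (<) L" "set L = S" "length L = card S"
      using finite_set_strict_sorted[OF fS] by blast
    note hf0 = hfacts[OF puS L(1,2) L(3)[unfolded cS] refl]
    define h where "h = (\<lambda>z::real^'d. s0 * Dt K (map f L @ [lift z]))"
    have hf: "(\<forall>j<n. j \<notin> S \<longrightarrow> 0 < h (x j)) \<and> (\<forall>s\<in>S. h (x s) = 0) \<and> (\<forall>z\<in>P. 0 \<le> h z) \<and>
      (\<forall>z1 z2 u v. u + v = 1 \<longrightarrow> h (u *\<^sub>R z1 + v *\<^sub>R z2) = u * h z1 + v * h z2)"
      using hf0 unfolding h_def by simp
    have hP: "\<forall>z\<in>P. 0 \<le> h z" using hf by blast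
    have ha: "\<And>z1 z2 u v. u + v = 1 \<Longrightarrow> h (u *\<^sub>R z1 + v *\<^sub>R z2) = u * h z1 + v * h z2"
      using hf by blast
    have "P \<inter> {z. h z = 0} face_of P" by (rule face_from_fun[OF cvP hP ha])
    moreover have "(P \<inter> {z. h z = 0}) \<inter> X = x ` S"
    proof
      show "P \<inter> {z. h z = 0} \<inter> X \<subseteq> x ` S"
      proof
        fix z assume z: "z \<in> P \<inter> {z. h z = 0} \<inter> X"
        then obtain j where j: "j < n" "z = x j" unfolding X_def by auto
        have "j \<in> S" using hf j z by (metis (mono_tags, lifting) IntD1 IntD2 less_irrefl mem_Collect_eq)
        then show "z \<in> x ` S" using j by simp
      qed
      show "x ` S \<subseteq> P \<inter> {z. h z = 0} \<inter> X"
        using hf Sn XP unfolding X_def by auto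
    qed
    ultimately show ?thesis by blast
  qed

  have V: "vertices_of P = X"
  proof -
    have indep: "\<forall>a\<in>X. a \<notin> convex hull (X - {a})"
    proof
      fix a assume "a \<in> X"
      then obtain i where i: "i < n" "a = x i" unfolding X_def by auto
      define a0 where "a0 = (if i + d \<le> n then i else n - d)"
      have Sint: "{a0..<a0+d} \<subseteq> {..<n}" "i \<in> {a0..<a0+d}" using i(1) nK d1 unfolding a0_def K_def by auto
      define S where "S = {a0..<a0+d}"
      have dd: "a0 + 2 * (d div 2) = a0 + d" using assms(1) unfolding d_def by simp
      have puS: "pu {..<n} S" using pu_interval[of a0 "d div 2" "{..<n}"] Sint unfolding dd S_def by simp
      have cS: "card S = d" unfolding S_def by simp
      have iS: "i \<in> S" using Sint S_def by simp
      have Sn: "S \<subseteq> {..<n}" using Sint S_def by simp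
      obtain L where L: "sorted_wrt (<) L" "set L = S" "length L = d"
        using finite_set_strict_sorted[of S] cS unfolding S_def by auto
      note hf0 = hfacts[OF puS L refl]
      define h where "h = (\<lambda>z::real^'d. s0 * Dt K (map f L @ [lift z]))"
      have hf: "(\<forall>j<n. j \<notin> S \<longrightarrow> 0 < h (x j)) \<and> (\<forall>s\<in>S. h (x s) = 0) \<and> (\<forall>z\<in>P. 0 \<le> h z) \<and>
        (\<forall>z1 z2 u v. u + v = 1 \<longrightarrow> h (u *\<^sub>R z1 + v *\<^sub>R z2) = u * h z1 + v * h z2)"
        using hf0 unfolding h_def by simp
      have hP: "\<forall>z\<in>P. 0 \<le> h z" using hf by blast
      have ha: "\<And>z1 z2 u v. u + v = 1 \<Longrightarrow> h (u *\<^sub>R z1 + v *\<^sub>R z2) = u * h z1 + v * h z2"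
        using hf by blast
      show "a \<notin> convex hull (X - {a})"
      proof
        assume ain: "a \<in> convex hull (X - {a})"
        define Q where "Q = convex hull (X - {a})"
        have QP: "Q \<subseteq> P" unfolding Q_def P_def by (rule hull_mono) blast
        have hQ: "\<forall>z\<in>Q. 0 \<le> h z" using QP hP by blast
        have Tf: "Q \<inter> {z. h z = 0} face_of convex hull (X - {a})"
          using face_from_fun[OF _ hQ ha] unfolding Q_def by simp
        have "compact (X - {a})" using finX by (simp add: finite_imp_compact)
        then obtain S' where S': "S' \<subseteq> X - {a}" "Q \<inter> {z. h z = 0} = convex hull S'"
          using face_of_convex_hull_subset[OF _ Tf] by blast
        have "h a = 0" using hf iS i by blast
        then have a1: "a \<in> convex hull S'" using ain S'(2) unfolding Q_def by blast
        have S'sub: "S' \<subseteq> x ` (S - {i})"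
        proof
          fix y assume y: "y \<in> S'"
          have yX: "y \<in> X" "y \<noteq> a" using S'(1) y by auto
          then obtain j where j0: "j < n" "y = x j" unfolding X_def by blast
          have j: "j < n" "y = x j" "x j \<noteq> x i" using j0 yX(2) i(2) by auto
          have "y \<in> convex hull S'" using y by (rule hull_inc)
          then have "y \<in> Q \<inter> {z. h z = 0}" by (simp only: S'(2))
          then have hj: "h (x j) = 0" using j by simp
          have "j \<in> S"
          proof (rule ccontr)
            assume "j \<notin> S"
            then have "0 < h (x j)" using hf j(1) by blast
            then show False using hj by simp
          qed
          moreover have "j \<noteq> i" using j by auto
          ultimately show "y \<in> x ` (S - {i})" using j by auto
        qed
        have a2: "x i \<in> convex hull (x ` (S - {i}))"
          using a1 hull_mono[OF S'sub] i by blast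
        have "\<not> {..<n} \<subseteq> S"
        proof
          assume "{..<n} \<subseteq> S"
          then have "n \<le> card S" using card_mono[of S "{..<n}"] unfolding S_def by simp
          then show False using cS nK K_def by simp
        qed
        then obtain j0 where j0: "j0 < n" "j0 \<notin> S" by auto
        have cSi: "card (S - {i}) = d - 1" using cS iS unfolding S_def by simp
        obtain L' where L': "sorted_wrt (<) L'" "set L' = S - {i}" "length L' = d - 1"
          using finite_set_strict_sorted[of "S - {i}"] cSi unfolding S_def by auto
        define M where "M = L' @ [j0]"
        have lM: "length M = d" using L'(3) d1 unfolding M_def by simp
        have dM: "distinct M" using L'(1,2) j0(2) unfolding M_def by (auto simp: strict_sorted_iff)
        have setM: "set M = (S - {i}) \<union> {j0}" using L'(2) unfolding M_def by auto
        define g where "g = (\<lambda>z::real^'d. Dt K (map f M @ [lift z]))"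
        have ga: "\<And>z1 z2 u v. u + v = 1 \<Longrightarrow> g (u *\<^sub>R z1 + v *\<^sub>R z2) = u * g z1 + v * g z2"
          unfolding g_def using phiaff lM by simp
        have gz: "g (x s) = 0" if "s \<in> S - {i}" for s
        proof -
          have "s \<in> set M" using that setM by simp
          then obtain p where p: "p < length M" "M ! p = s" by (auto simp: in_set_conv_nth)
          show ?thesis unfolding g_def
            by (rule Dt_rep[of _ K p d]) (use p lM in \<open>simp_all add: K_def f_def nth_append\<close>)
        qed
        have "convex {z. g z = 0}" by (rule convex_ge0(2)) (use ga in blast)
        moreover have "x ` (S - {i}) \<subseteq> {z. g z = 0}" using gz by auto
        ultimately have "convex hull (x ` (S - {i})) \<subseteq> {z. g z = 0}" by (rule hull_minimal[rotated])
        then have "g (x i) = 0" using a2 by blast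
        moreover have "Dt K (map f (M @ [i])) \<noteq> 0"
        proof (rule nzD)
          show "distinct (M @ [i])" using dM setM j0(2) iS by auto
          show "set (M @ [i]) \<subseteq> {..<n}" using setM Sn j0(1) i(1) by auto
          show "length (M @ [i]) = K" using lM K_def by simp
        qed
        ultimately show False unfolding g_def by (simp add: f_def)
      qed
    qed
    have "\<forall>v. v extreme_point_of P \<longleftrightarrow> v \<in> X"
      using extreme_point_of_convex_hull_convex_independent[OF finite_imp_compact[OF finX]] indep
      unfolding P_def by blast
    then show ?thesis unfolding vertices_of_def by auto
  qed

  have \<pi>inj: "inj_on \<pi> {..<n}" using assms(4) by (rule permutes_inj_on)
  have \<pi>n: "\<pi> t < n" if "t < n" for t using permutes_in_image[OF assms(4)] that by simp
  have key: "0 < Dt K (map (f \<circ> \<pi>) (L @ [j])) * Dt K (map (f \<circ> \<pi>) (L @ [j']))"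
    if puS: "pu {..<n} S" and sL: "sorted_wrt (<) L" and setL: "set L = S" and lL: "length L = d"
      and j: "j \<in> {..<n} - S" and j': "j' \<in> {..<n} - S" for S L j j'
  proof -
    have Sn: "S \<subseteq> {..<n}" using pu_subset[OF puS] .
    have dL: "distinct L" using sL by (simp add: strict_sorted_iff)
    have cS: "card S = d" using distinct_card[OF dL] setL lL by simp
    obtain F where F: "F face_of P" "F \<inter> X = x ` S" using face_pu[OF puS cS] by blast
    have xSV: "x ` S \<subseteq> vertices_of P" using V Sn unfolding X_def by auto
    have "(\<exists>F. F face_of P \<and> F \<inter> vertices_of P = x ` S) \<longleftrightarrow>
          (\<exists>G. G face_of P \<and> G \<inter> vertices_of P = \<sigma> ` (x ` S))"
      using ca xSV unfolding comb_automorphism_def by blast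
    then obtain G where G: "G face_of P" "G \<inter> X = \<sigma> ` (x ` S)" using F V by auto
    have \<sigma>S: "\<sigma> ` (x ` S) = x ` (\<pi> ` S)"
    proof -
      have "\<sigma> ` (x ` S) = (\<sigma> \<circ> x) ` S" by (simp add: image_comp)
      also have "\<dots> = (x \<circ> \<pi>) ` S" by (rule image_cong) (use \<sigma>x Sn in auto)
      also have "\<dots> = x ` (\<pi> ` S)" by (simp add: image_comp)
      finally show ?thesis .
    qed
    have "polytope P" unfolding P_def using finX by (rule polytope_convex_hull)
    then have "polyhedron P" by (rule polytope_imp_polyhedron)
    then have "G exposed_face_of P" using G(1) exposed_face_of_polyhedron by blast
    then obtain a b where ab: "P \<subseteq> {z. a \<bullet> z \<le> b}" "G = P \<inter> {z. a \<bullet> z = b}"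
      unfolding exposed_face_of_def by blast
    define Lp where "Lp = map \<pi> L"
    have lLp: "length Lp = d" using lL unfolding Lp_def by simp
    have Gon: "a \<bullet> (map x Lp ! c) = b" if "c < d" for c
    proof -
      have "L ! c \<in> S" using that lL setL by auto
      then have "x (\<pi> (L ! c)) \<in> G \<inter> X" using G(2) \<sigma>S by auto
      then show ?thesis using that lL ab(2) unfolding Lp_def by auto
    qed
    have off: "a \<bullet> x (\<pi> t) < b" if t: "t \<in> {..<n} - S" for t
    proof -
      have tn: "t < n" using t by simp
      have inX: "x (\<pi> t) \<in> X" using \<pi>n[OF tn] unfolding X_def by simp
      then have le: "a \<bullet> x (\<pi> t) \<le> b" using XP ab(1) by blast
      have "a \<bullet> x (\<pi> t) \<noteq> b"
      proof
        assume "a \<bullet> x (\<pi> t) = b"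
        then have "x (\<pi> t) \<in> G \<inter> X" using inX XP ab(2) by blast
        then obtain s where s: "s \<in> S" "x (\<pi> t) = x (\<pi> s)" using G(2) \<sigma>S by auto
        have "\<pi> t = \<pi> s" using xinj[OF \<pi>n[OF tn] \<pi>n s(2)] s(1) Sn by auto
        then have "t = s" using \<pi>inj tn s(1) Sn unfolding inj_on_def by auto
        then show False using s(1) t by simp
      qed
      then show ?thesis using le by simp
    qed
    define \<phi> where "\<phi> = (\<lambda>z::real^'d. Dt K (map lift (map x Lp) @ [lift z]))"
    have eqF: "Dt K (map (f \<circ> \<pi>) (L @ [t])) = \<phi> (x (\<pi> t))" for t
      unfolding \<phi>_def Lp_def f_def by (simp add: comp_assoc)
    have nz\<phi>: "\<phi> (x (\<pi> t)) \<noteq> 0" if t: "t \<in> {..<n} - S" for t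
    proof -
      have "Dt K (map f (Lp @ [\<pi> t])) \<noteq> 0"
      proof (rule nzD)
        have "inj_on \<pi> (set L \<union> {t})" by (rule inj_on_subset[OF \<pi>inj]) (use Sn setL t in auto)
        then show "distinct (Lp @ [\<pi> t])" using dL t setL unfolding Lp_def
          by (auto simp: distinct_map inj_on_def)
        show "set (Lp @ [\<pi> t]) \<subseteq> {..<n}" using \<pi>n Sn setL t unfolding Lp_def by auto
        show "length (Lp @ [\<pi> t]) = K" using lLp K_def by simp
      qed
      then show ?thesis unfolding \<phi>_def f_def by simp
    qed
    show ?thesis
    proof (rule ccontr)
      assume nc: "\<not> 0 < Dt K (map (f \<circ> \<pi>) (L @ [j])) * Dt K (map (f \<circ> \<pi>) (L @ [j']))"
      define z1 where "z1 = x (\<pi> j)"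
      define z2 where "z2 = x (\<pi> j')"
      define p1 where "p1 = \<phi> z1"
      define p2 where "p2 = \<phi> z2"
      have p1n: "p1 \<noteq> 0" "p2 \<noteq> 0" using nz\<phi>[OF j] nz\<phi>[OF j'] unfolding p1_def p2_def z1_def z2_def by auto
      have neg: "p1 * p2 < 0" using nc p1n unfolding eqF p1_def p2_def z1_def z2_def
        by (metis linorder_neqE_linordered_idom mult_eq_0_iff)
      define t where "t = p1 / (p1 - p2)"
      have dne: "p1 - p2 \<noteq> 0" using neg by auto
      have tp: "t * (p1 - p2) = p1" unfolding t_def using dne by simp
      have sg: "(0 < p1 \<and> p2 < 0) \<or> (p1 < 0 \<and> 0 < p2)" using neg by (auto simp: mult_less_0_iff)
      have t0: "0 < t" using sg unfolding t_def by (auto simp: zero_less_divide_iff)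
      have t1: "t < 1" using sg unfolding t_def by (auto simp: divide_less_eq)
      note t01 = t0 t1
      define z where "z = (1 - t) *\<^sub>R z1 + t *\<^sub>R z2"
      have "\<phi> z = (1 - t) * p1 + t * p2"
        unfolding z_def p1_def p2_def \<phi>_def by (rule phiaff) (use lLp in simp_all)
      also have "\<dots> = p1 - t * (p1 - p2)" by (simp add: algebra_simps)
      also have "\<dots> = 0" using tp by simp
      finally have \<phi>z: "\<phi> z = 0" .
      obtain \<mu> where \<mu>: "sum \<mu> {..<d} = 1" "z = (\<Sum>c<d. \<mu> c *\<^sub>R (map x Lp) ! c)"
        using zero_imp_comb[of "map x Lp" z1 z] lLp p1n \<phi>z unfolding p1_def \<phi>_def K_def d_def by auto
      have "a \<bullet> z = (\<Sum>c<d. \<mu> c * (a \<bullet> (map x Lp ! c)))"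
        unfolding \<mu>(2) by (simp add: inner_sum_right)
      also have "\<dots> = (\<Sum>c<d. \<mu> c * b)" using Gon by simp
      also have "\<dots> = b" using \<mu>(1) by (simp add: sum_distrib_right[symmetric])
      finally have az: "a \<bullet> z = b" .
      have "a \<bullet> z = (1 - t) * (a \<bullet> z1) + t * (a \<bullet> z2)" unfolding z_def by (simp add: inner_add_right)
      also have "\<dots> < (1 - t) * b + t * b"
        using off[OF j] off[OF j'] t01 unfolding z1_def z2_def
        by (intro add_strict_mono mult_strict_left_mono) auto
      also have "\<dots> = b" by (simp add: algebra_simps)
      finally show False using az by simp
    qed
  qed

  define Fy where "Fy = (\<lambda>L. Dt K (map (f \<circ> \<pi>) L))"
  have fpc: "\<And>i. (f \<circ> \<pi>) i \<in> carrier_vec K" using fc by simp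
  have chy: "chiro K Fy" unfolding Fy_def by (rule chiro_Dt[OF fpc])
  define m where "m = d div 2"
  have Km: "2 * m + 1 = K" using assms(1) unfolding m_def K_def d_def by simp
  have nzy: "\<forall>L. sl {..<n} K L \<longrightarrow> Fy L \<noteq> 0"
  proof (intro allI impI)
    fix L assume L: "sl {..<n} K L"
    have "Dt K (map f (map \<pi> L)) \<noteq> 0"
    proof (rule nzD)
      have dL: "distinct L" using L unfolding sl_def by (simp add: strict_sorted_iff)
      have "inj_on \<pi> (set L)" by (rule inj_on_subset[OF \<pi>inj]) (use L in \<open>auto simp: sl_def\<close>)
      then show "distinct (map \<pi> L)" using dL by (simp add: distinct_map)
      show "set (map \<pi> L) \<subseteq> {..<n}" using L \<pi>n unfolding sl_def by auto
      show "length (map \<pi> L) = K" using L unfolding sl_def by simp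
    qed
    then show "Fy L \<noteq> 0" unfolding Fy_def by simp
  qed
  have facy: "\<forall>S L j j'. pu {..<n} S \<longrightarrow> sorted_wrt (<) L \<longrightarrow> set L = S \<longrightarrow> length L = 2*m \<longrightarrow>
         j \<in> {..<n} - S \<longrightarrow> j' \<in> {..<n} - S \<longrightarrow> 0 < Fy (L@[j]) * Fy (L@[j'])"
    using key Km unfolding Fy_def K_def by auto
  have mc: "chiro (2*m+1) Fy \<longrightarrow> finite {..<n} \<longrightarrow> 2*m+1 \<le> card {..<n} \<longrightarrow>
     (\<forall>L. sl {..<n} (2*m+1) L \<longrightarrow> Fy L \<noteq> 0) \<longrightarrow>
     (\<forall>S L j j'. pu {..<n} S \<longrightarrow> sorted_wrt (<) L \<longrightarrow> set L = S \<longrightarrow> length L = 2*m \<longrightarrow>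
         j \<in> {..<n} - S \<longrightarrow> j' \<in> {..<n} - S \<longrightarrow> 0 < Fy (L@[j]) * Fy (L@[j'])) \<longrightarrow>
     (\<forall>L L'. sl {..<n} (2*m+1) L \<longrightarrow> sl {..<n} (2*m+1) L' \<longrightarrow> 0 < Fy L * Fy L')"
    using main_comb[of m] by blast
  have cn: "K \<le> card {..<n}" using nK by simp
  have all: "\<forall>L L'. sl {..<n} K L \<longrightarrow> sl {..<n} K L' \<longrightarrow> 0 < Fy L * Fy L'"
    using mc[unfolded Km] chy cn nzy facy by blast
  define r where "r = Fy [0..<K]"
  have slr: "sl {..<n} K [0..<K]" unfolding sl_def using nK by auto
  show ?thesis unfolding minors_same_sign_def
  proof (rule bexI[of _ "if 0 < r then 1 else -1"], intro allI impI)
    fix c assume c: "strict_mono_on {..CARD('d)} c \<and> c CARD('d) < n"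
    have Lc: "sl {..<n} K (map c [0..<K])"
    proof -
      have "sorted_wrt (<) (map c [0..<K])"
        unfolding sorted_wrt_iff_nth_less
      proof (intro allI impI)
        fix i j assume ij: "i < j" "j < length (map c [0..<K])"
        then have "j < K" by simp
        then have "c i < c j" using c ij(1) unfolding strict_mono_on_def K_def d_def by auto
        then show "map c [0..<K] ! i < map c [0..<K] ! j" using ij \<open>j < K\<close> by (simp del: upt_Suc)
      qed
      moreover have "c i < n" if "i < K" for i
      proof -
        have "c i \<le> c CARD('d)" using c that unfolding K_def d_def
          by (metis atMost_iff less_Suc_eq_le le_less strict_mono_on_def Suc_eq_plus1)
        then show ?thesis using c by simp
      qed
      moreover have "set (map c [0..<K]) \<subseteq> {..<n}" using \<open>\<And>i. i < K \<Longrightarrow> c i < n\<close> by (auto simp del: upt_Suc)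
      ultimately show ?thesis unfolding sl_def by (simp del: upt_Suc)
    qed
    have mm: "max_minor (x \<circ> \<pi>) c = Fy (map c [0..<K])"
      using max_minor_Dt[of "x \<circ> \<pi>" c] unfolding Fy_def f_def K_def d_def by (simp add: comp_assoc)
    have "0 < Fy (map c [0..<K]) * r" using all Lc slr unfolding r_def by blast
    then show "0 < (if 0 < r then 1 else -1) * max_minor (x \<circ> \<pi>) c"
      unfolding mm by (auto simp: zero_less_mult_iff)
  qed simp
qed


end
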